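(* Let $\alpha>0$ and let $(X^n)_{n=1}^\infty$, $(\Lambda^n)_{n=1}^\infty$ be given by $$X^{n+1} =\mathfrak{S}_{f_{\alpha}}\left(F-\frac{\Lambda^n}{2}\right),\qquad \Lambda^{n+1} = \Lambda^{n} + \alpha\mathcal{P}_{\mathcal{M}^\perp}(X^{n+1}),\qquad \Lambda^0=0.$$ Then $(X^{n})_{n=1}^\infty$ and $(\Lambda^{n})_{n=1}^\infty$ converge to some limits $X^\star$ and $\Lambda^\star$, where $X^\star$ is the solution to $$\operatorname{arg\,min}_{X\in\mathcal{M}}\mathscr{N}_{F}^{**}(X)+\frac{\alpha}{2}\|X\|_2^2.$$
   Context: $X,F$ are $M\times N$ matrices, $\|\cdot\|_2$ the Frobenius norm, $\mathcal{M}$ a linear subspace of matrices with orthogonal projection $\mathcal{P}_{\mathcal{M}^\perp}$ onto its orthogonal complement, $\sigma_0>0$ a parameter, and $\mathscr{N}_F^{**}(X)= \sum_j\left( \sigma_0^2-\left(\max\left(\sigma_0-\sigma_j(X),0\right)\right)^2\right) + \|X-F\|_2^2$ is the convex envelope of $\sigma_0^2\operatorname{rank}(X)+\|X-F\|_2^2$. For a matrix $G=U\Sigma_\phi V^*$ (SVD), $\mathfrak{S}_{f_\alpha}(G)=U\Sigma_{f_\alpha(\phi)}V^*$, where $f_\alpha(x)=0$ for $x<\sigma_0$, $f_\alpha(x)=\frac{2}{\alpha}(x-\sigma_0)$ for $\sigma_0\leq x<(1+\frac{\alpha}{2})\sigma_0$, and $f_\alpha(x)=(1+\frac{\alpha}{2})^{-1}x$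 for $x\geq(1+\frac{\alpha}{2})\sigma_0$. *)

theory Defs
  imports "HOL-Analysis.Analysis"
begin

text \<open>Real M x N matrices are modelled as real^'n^'m. The HOL-Analysis norm and
inner product on this type are the Frobenius norm and Frobenius inner product.\<close>

definition outer :: "real^'m \<Rightarrow> real^'n \<Rightarrow> real^'n^'m" where
  "outer x y = (\<chi> i j. x$i * y$j)"

definition svd_rep :: "real^'n^'m \<Rightarrow> nat \<Rightarrow> (nat \<Rightarrow> real) \<Rightarrow> (nat \<Rightarrow> real^'m)
                        \<Rightarrow> (nat \<Rightarrow> real^'n) \<Rightarrow> bool" where
  "svd_rep G r s u v \<longleftrightarrow>
     (\<forall>k<r. s k > 0) \<and>
     (\<forall>i<r. \<forall>j<r. u i \<bullet> u j = (if i = j then 1 else 0)) \<and>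
     (\<forall>i<r. \<forall>j<r. v i \<bullet> v j = (if i = j then 1 else 0)) \<and>
     G = (\<Sum>k<r. s k *\<^sub>R outer (u k) (v k))"

text \<open>Spectral map S_f(G) = U Sigma_{f(phi)} V^*, for f with f 0 = 0
  (so that zero singular values may be dropped).\<close>
definition spectral_map :: "(real \<Rightarrow> real) \<Rightarrow> real^'n^'m \<Rightarrow> real^'n^'m" where
  "spectral_map f G = (SOME X. \<exists>r s u v. svd_rep G r s u v \<and>
        X = (\<Sum>k<r. f (s k) *\<^sub>R outer (u k) (v k)))"

definition f_alpha :: "real \<Rightarrow> real \<Rightarrow> real \<Rightarrow> real" where
  "f_alpha \<sigma>0 \<alpha> x =
     (if x < \<sigma>0 then 0
      else if x < (1 + \<alpha>/2) * \<sigma>0 then (2/\<alpha>) * (x - \<sigma>0)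
      else x / (1 + \<alpha>/2))"

text \<open>N_F^**(X) = sum_j (sigma0^2 - (max(sigma0 - sigma_j(X),0))^2) + ||X - F||^2.
  Zero singular values contribute 0, so summing over the nonzero ones suffices.\<close>
definition N_env :: "real \<Rightarrow> real^'n^'m \<Rightarrow> real^'n^'m \<Rightarrow> real" where
  "N_env \<sigma>0 F X = (SOME t. \<exists>r s u v. svd_rep X r s u v \<and>
        t = (\<Sum>k<r. \<sigma>0\<^sup>2 - (max (\<sigma>0 - s k) 0)\<^sup>2)) + (norm (X - F))\<^sup>2"

definition proj_perp :: "(real^'n^'m) set \<Rightarrow> real^'n^'m \<Rightarrow> real^'n^'m" where
  "proj_perp Msub X = X - (THE Y. Y \<in> Msub \<and> (\<forall>Z\<in>Msub. (X - Y) \<bullet> Z = 0))"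

end

theory Submission
  imports Defs
begin


definition onl :: "nat \<Rightarrow> (nat \<Rightarrow> 'a::real_inner) \<Rightarrow> bool" where
  "onl r u \<longleftrightarrow> (\<forall>i<r. \<forall>j<r. u i \<bullet> u j = (if i = j then 1 else 0))"

lemma inner_outer: "outer a b \<bullet> outer c d = (a \<bullet> c) * (b \<bullet> d)"
  apply (simp add: inner_vec_def outer_def sum_product mult_ac)
  apply (rule sum.swap)
  done

lemma outer_mv: "outer a b *v x = (b \<bullet> x) *\<^sub>R a"
  by (simp add: vec_eq_iff matrix_vector_mult_def outer_def inner_vec_def sum_distrib_left
      sum_distrib_right mult_ac)

lemma outer_vm: "x v* outer a b = (x \<bullet> a) *\<^sub>R b"
  by (simp add: vec_eq_iff vector_matrix_mult_def outer_def inner_vec_def sum_distrib_left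
      sum_distrib_right mult_ac)

lemma mv_inner: "a \<bullet> (G *v b) = G \<bullet> outer a b"
  by (simp add: inner_vec_def matrix_vector_mult_def outer_def sum_distrib_left mult_ac)

lemma sum_mv: "(\<Sum>k\<in>A. f k) *v x = (\<Sum>k\<in>A. f k *v (x::real^'n))"
  by (induction A rule: infinite_finite_induct) (auto simp: matrix_vector_mult_add_rdistrib)

lemma vm_add: "(x::real^'m) v* (A + B) = x v* A + x v* B"
  by (simp add: vector_matrix_mult_add_rdistrib)

lemma sum_vm: "(x::real^'m) v* (\<Sum>k\<in>A. f k) = (\<Sum>k\<in>A. x v* f k)"
  by (induction A rule: infinite_finite_induct) (auto simp: vm_add)

lemma scale_mv: "(c *\<^sub>R A) *v x = c *\<^sub>R (A *v (x::real^'n))"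
  by (simp add: vec_eq_iff matrix_vector_mult_def sum_distrib_left mult_ac)

lemma scale_vm: "(x::real^'m) v* (c *\<^sub>R A) = c *\<^sub>R (x v* A)"
  by (simp add: vec_eq_iff vector_matrix_mult_def sum_distrib_left mult_ac)

lemma diff_vm: "(x::real^'m) v* (A - B) = x v* A - x v* B"
  by (simp add: vec_eq_iff vector_matrix_mult_def sum_subtractf algebra_simps)

lemma onl_outer: "onl r u \<Longrightarrow> onl r v \<Longrightarrow> onl r (\<lambda>k. outer (u k) (v k))"
  by (simp add: onl_def inner_outer)

lemma onl_norm: "onl r u \<Longrightarrow> k < r \<Longrightarrow> norm (u k) = 1"
  by (simp add: onl_def norm_eq_1)

lemma sum_onl_single: "onl r e \<Longrightarrow> k < r \<Longrightarrow> (\<Sum>j<r. c j *\<^sub>R e j) \<bullet> e k = c k"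
proof -
  assume o: "onl r e" and k: "k < r"
  have "(\<Sum>j<r. c j *\<^sub>R e j) \<bullet> e k = (\<Sum>j<r. c j * (e j \<bullet> e k))"
    by (simp add: inner_sum_left)
  also have "\<dots> = (\<Sum>j<r. if j = k then c j else 0)"
    by (rule sum.cong) (use o k in \<open>auto simp: onl_def\<close>)
  also have "\<dots> = c k" using k by simp
  finally show ?thesis .
qed

lemma sum_onl: "onl r e \<Longrightarrow> (\<Sum>k<r. c k *\<^sub>R e k) \<bullet> (\<Sum>k<r. d k *\<^sub>R e k) = (\<Sum>k<r. c k * d k)"
proof -
  assume o: "onl r e"
  have "(\<Sum>k<r. c k *\<^sub>R e k) \<bullet> (\<Sum>k<r. d k *\<^sub>R e k) = (\<Sum>k<r. d k * ((\<Sum>j<r. c j *\<^sub>R e j) \<bullet> e k))"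
    by (simp add: inner_sum_right)
  also have "\<dots> = (\<Sum>k<r. c k * d k)"
    by (rule sum.cong) (use o sum_onl_single in auto)
  finally show ?thesis .
qed

lemma norm_onl: "onl r e \<Longrightarrow> (norm (\<Sum>k<r. c k *\<^sub>R e k))\<^sup>2 = (\<Sum>k<r. (c k)\<^sup>2)"
  unfolding power2_norm_eq_inner by (simp add: sum_onl power2_eq_square)

lemma bessel: "onl r e \<Longrightarrow> (\<Sum>k<r. (z \<bullet> e k)\<^sup>2) \<le> (norm z)\<^sup>2"
proof -
  assume o: "onl r e"
  define w where "w = (\<Sum>k<r. (z \<bullet> e k) *\<^sub>R e k)"
  have zw: "z \<bullet> w = (\<Sum>k<r. (z \<bullet> e k)\<^sup>2)"
    by (simp add: w_def inner_sum_right power2_eq_square)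
  have ww: "w \<bullet> w = (\<Sum>k<r. (z \<bullet> e k)\<^sup>2)"
    unfolding w_def using sum_onl[OF o] by (simp add: power2_eq_square)
  have "0 \<le> (z - w) \<bullet> (z - w)" by simp
  also have "\<dots> = z \<bullet> z - 2 * (z \<bullet> w) + w \<bullet> w"
    by (simp add: inner_diff_left inner_diff_right inner_commute)
  finally show ?thesis using zw ww by (simp add: power2_norm_eq_inner)
qed

lemma cs_max:
  fixes y a :: "'a::real_inner"
  assumes a: "norm a = 1" and ay: "a \<bullet> y = \<sigma>" and s: "\<sigma> > 0"
    and mx: "\<And>c. norm c = 1 \<Longrightarrow> c \<bullet> y \<le> \<sigma>"
  shows "y = \<sigma> *\<^sub>R a"
proof -
  have y0: "y \<noteq> 0" using ay s by auto
  have "((1 / norm y) *\<^sub>R y) \<bullet> y \<le> \<sigma>" by (rule mx) (use y0 in simp)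
  then have ny: "norm y \<le> \<sigma>" using y0 by (simp add: power2_norm_eq_inner[symmetric] power2_eq_square)
  have "\<sigma> \<le> norm y" using Cauchy_Schwarz_ineq2[of a y] ay a by simp
  with ny have ny': "norm y = \<sigma>" by simp
  have "(a - (1/\<sigma>) *\<^sub>R y) \<bullet> (a - (1/\<sigma>) *\<^sub>R y) = a \<bullet> a - 2 / \<sigma> * (a \<bullet> y) + (y \<bullet> y) / \<sigma>\<^sup>2"
    by (simp add: inner_diff_left inner_diff_right inner_commute power2_eq_square)
  also have "\<dots> = 0" using a ay ny' s by (simp add: norm_eq_1 power2_norm_eq_inner[symmetric])
  finally have "a = (1/\<sigma>) *\<^sub>R y" by simp
  then show ?thesis using s by simp
qed

lemma svd_exists: "\<exists>r s u v. svd_rep (G::real^'n^'m) r s u v"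
proof (induction "dim (range (\<lambda>x. G *v x))" arbitrary: G rule: less_induct)
  case less
  show ?case
  proof (cases "G = 0")
    case True
    have "svd_rep G 0 s u v" for s u v using True by (simp add: svd_rep_def)
    then show ?thesis by blast
  next
    case False
    then obtain i j where ij: "G $ i $ j \<noteq> 0" by (metis vec_eq_iff zero_index)
    define S where "S = sphere (0::real^'m) 1 \<times> sphere (0::real^'n) 1"
    define h where "h p = fst p \<bullet> (G *v snd p)" for p
    have "compact S" by (simp add: S_def compact_Times)
    moreover have "S \<noteq> {}" using vector_choose_size[of 1] by (auto simp: S_def)
    moreover have "continuous_on S h"
      unfolding h_def
      by (intro continuous_intros linear_continuous_on continuous_on_compose2[of UNIV "\<lambda>x. G *v x"])
        (auto simp: matrix_vector_mul_linear linear_conv_bounded_linear)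
    ultimately obtain p where pS: "p \<in> S" and pmax: "\<And>q. q \<in> S \<Longrightarrow> h q \<le> h p"
      using continuous_attains_sup[of S h] by blast
    define a1 where "a1 = fst p"
    define b1 where "b1 = snd p"
    define \<sigma> where "\<sigma> = h p"
    have na1: "norm a1 = 1" and nb1: "norm b1 = 1" using pS by (auto simp: S_def a1_def b1_def)
    have mx: "a \<bullet> (G *v b) \<le> \<sigma>" if "norm a = 1" "norm b = 1" for a b
      using pmax[of "(a, b)"] that by (simp add: S_def h_def \<sigma>_def)
    have sp: "\<sigma> > 0"
    proof -
      define c where "c = (if G $ i $ j > 0 then 1 else -1::real)"
      have "(c *\<^sub>R axis i 1) \<bullet> (G *v axis j 1) = c * G $ i $ j"
        by (simp add: matrix_vector_mult_basis column_def inner_axis')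
      also have "\<dots> > 0" using ij by (auto simp: c_def)
      moreover have n: "norm (c *\<^sub>R axis i (1::real)) = 1" by (simp add: c_def)
      ultimately show ?thesis using mx[OF n norm_axis_1[of j]] by linarith
    qed
    have ay: "a1 \<bullet> (G *v b1) = \<sigma>" by (simp add: a1_def b1_def \<sigma>_def h_def)
    have Gb1: "G *v b1 = \<sigma> *\<^sub>R a1"
      by (rule cs_max[OF na1 ay sp]) (use mx nb1 in auto)
    have a1G: "a1 v* G = \<sigma> *\<^sub>R b1"
    proof (rule cs_max[OF nb1 _ sp])
      show "b1 \<bullet> (a1 v* G) = \<sigma>" using ay by (metis dot_lmul_matrix inner_commute)
      show "c \<bullet> (a1 v* G) \<le> \<sigma>" if "norm c = 1" for c
        using mx[OF na1 that] by (metis dot_lmul_matrix inner_commute)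
    qed
    define G' where "G' = G - \<sigma> *\<^sub>R outer a1 b1"
    have G'b1: "G' *v b1 = 0"
      using nb1 by (simp add: G'_def matrix_vector_mult_diff_rdistrib scale_mv outer_mv Gb1 norm_eq_1)
    have a1G': "a1 v* G' = 0"
      using na1 by (simp add: G'_def diff_vm scale_vm outer_vm a1G norm_eq_1)
    have G'x: "G' *v x = G *v (x - (b1 \<bullet> x) *\<^sub>R b1)" for x
      by (simp add: G'_def matrix_vector_mult_diff_rdistrib matrix_vector_mult_diff_distrib
          scale_mv outer_mv matrix_vector_mult_scaleR Gb1)
    have sub: "range (\<lambda>x. G' *v x) \<subseteq> range (\<lambda>x. G *v x)"
      using G'x by auto
    have a1in: "a1 \<in> range (\<lambda>x. G *v x)"
    proof
      show "a1 = G *v ((1/\<sigma>) *\<^sub>R b1)" using sp by (simp add: matrix_vector_mult_scaleR Gb1)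
    qed simp
    have a1out: "a1 \<notin> range (\<lambda>x. G' *v x)"
    proof
      assume "a1 \<in> range (\<lambda>x. G' *v x)"
      then obtain x where "a1 = G' *v x" by auto
      then have "a1 \<bullet> a1 = (a1 v* G') \<bullet> x" by (simp add: dot_lmul_matrix)
      then show False using a1G' na1 by (simp add: norm_eq_1)
    qed
    have ss1: "subspace (range (\<lambda>x. G' *v x))"
      by (rule linear_subspace_image) (auto simp: matrix_vector_mul_linear)
    have ss2: "subspace (range (\<lambda>x. G *v x))"
      by (rule linear_subspace_image) (auto simp: matrix_vector_mul_linear)
    have "dim (range (\<lambda>x. G' *v x)) < dim (range (\<lambda>x. G *v x))"
    proof (rule dim_psubset)
      have e1: "span (range (\<lambda>x. G' *v x)) = range (\<lambda>x. G' *v x)" using ss1 by simp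
      have e2: "span (range (\<lambda>x. G *v x)) = range (\<lambda>x. G *v x)" using ss2 by simp
      show "span (range (\<lambda>x. G' *v x)) \<subset> span (range (\<lambda>x. G *v x))"
        unfolding e1 e2 using sub a1in a1out by blast
    qed
    then obtain r s u v where rep: "svd_rep G' r s u v" using less by blast
    have sp': "\<forall>k<r. s k > 0" and ou: "onl r u" and ov: "onl r v"
      and G'eq: "G' = (\<Sum>k<r. s k *\<^sub>R outer (u k) (v k))"
      using rep by (auto simp: svd_rep_def onl_def)
    have G'v: "G' *v v k = s k *\<^sub>R u k" if k: "k < r" for k
    proof -
      have "G' *v v k = (\<Sum>j<r. (s j * (v j \<bullet> v k)) *\<^sub>R u j)"
        by (simp add: G'eq sum_mv scale_mv outer_mv)
      also have "\<dots> = (\<Sum>j<r. if j = k then s k *\<^sub>R u k else 0)"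
        by (rule sum.cong) (use ov k in \<open>auto simp: onl_def\<close>)
      also have "\<dots> = s k *\<^sub>R u k" using k by simp
      finally show ?thesis .
    qed
    have uG': "u k v* G' = s k *\<^sub>R v k" if k: "k < r" for k
    proof -
      have "u k v* G' = (\<Sum>j<r. (s j * (u k \<bullet> u j)) *\<^sub>R v j)"
        by (simp add: G'eq sum_vm scale_vm outer_vm)
      also have "\<dots> = (\<Sum>j<r. if j = k then s k *\<^sub>R v k else 0)"
        by (rule sum.cong) (use ou k in \<open>auto simp: onl_def\<close>)
      also have "\<dots> = s k *\<^sub>R v k" using k by simp
      finally show ?thesis .
    qed
    have au: "a1 \<bullet> u k = 0" if k: "k < r" for k
    proof -
      have "s k * (a1 \<bullet> u k) = a1 \<bullet> (G' *v v k)" using G'v[OF k] by simp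
      also have "\<dots> = 0" by (simp add: dot_lmul_matrix[symmetric] a1G')
      finally show ?thesis using sp' k by (metis less_irrefl mult_eq_0_iff)
    qed
    have bv: "b1 \<bullet> v k = 0" if k: "k < r" for k
    proof -
      have "s k * (v k \<bullet> b1) = (u k v* G') \<bullet> b1" using uG'[OF k] by simp
      also have "\<dots> = 0" by (simp add: dot_lmul_matrix G'b1)
      finally show ?thesis using sp' k by (metis less_irrefl mult_eq_0_iff inner_commute)
    qed
    define s2 where "s2 k = (if k < r then s k else \<sigma>)" for k
    define u2 where "u2 k = (if k < r then u k else a1)" for k
    define v2 where "v2 k = (if k < r then v k else b1)" for k
    have "svd_rep G (Suc r) s2 u2 v2"
      unfolding svd_rep_def
    proof (intro conjI allI impI)
      show "k < Suc r \<Longrightarrow> 0 < s2 k" for k using sp' sp by (auto simp: s2_def)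
      show "u2 i \<bullet> u2 j = (if i = j then 1 else 0)" if "i < Suc r" "j < Suc r" for i j
        using that ou au na1 by (auto simp: u2_def onl_def norm_eq_1 inner_commute less_Suc_eq)
      show "v2 i \<bullet> v2 j = (if i = j then 1 else 0)" if "i < Suc r" "j < Suc r" for i j
        using that ov bv nb1 by (auto simp: v2_def onl_def norm_eq_1 inner_commute less_Suc_eq)
      have "(\<Sum>k<Suc r. s2 k *\<^sub>R outer (u2 k) (v2 k)) = (\<Sum>k<r. s k *\<^sub>R outer (u k) (v k)) + \<sigma> *\<^sub>R outer a1 b1"
        by (simp add: s2_def u2_def v2_def)
      also have "\<dots> = G" by (simp add: G'eq[symmetric] G'_def)
      finally show "G = (\<Sum>k<Suc r. s2 k *\<^sub>R outer (u2 k) (v2 k))" by simp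
    qed
    then show ?thesis by blast
  qed
qed



definition grep :: "real^'n^'m \<Rightarrow> nat \<Rightarrow> (nat \<Rightarrow> real) \<Rightarrow> (nat \<Rightarrow> real^'m) \<Rightarrow> (nat \<Rightarrow> real^'n) \<Rightarrow> bool" where
  "grep G r s u v \<longleftrightarrow> (\<forall>k<r. s k \<ge> 0) \<and> onl r u \<and> onl r v \<and> G = (\<Sum>k<r. s k *\<^sub>R outer (u k) (v k))"

definition op_le :: "real^'n^'m \<Rightarrow> real \<Rightarrow> bool" where
  "op_le Z c \<longleftrightarrow> (\<forall>a b. norm a = 1 \<longrightarrow> norm b = 1 \<longrightarrow> Z \<bullet> outer a b \<le> c)"

lemma svd_grep: "svd_rep G r s u v \<Longrightarrow> grep G r s u v"
  by (auto simp: svd_rep_def grep_def onl_def less_imp_le)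

lemma grep_onl: "grep G r s u v \<Longrightarrow> onl r (\<lambda>k. outer (u k) (v k))"
  by (simp add: grep_def onl_outer)

lemma op_leD: assumes "op_le Z c" "grep G r s u v" "k < r" shows "Z \<bullet> outer (u k) (v k) \<le> c"
proof -
  have "norm (u k) = 1" "norm (v k) = 1" using assms(2,3) by (auto simp: grep_def intro: onl_norm)
  then show ?thesis using assms(1) by (simp add: op_le_def)
qed

lemma R1: assumes g: "grep G r s u v" shows "(norm G)\<^sup>2 = (\<Sum>k<r. (s k)\<^sup>2)"
proof -
  have "G = (\<Sum>k<r. s k *\<^sub>R outer (u k) (v k))" using g by (simp add: grep_def)
  then show ?thesis using norm_onl[OF grep_onl[OF g], of s] by simp
qed

lemma R2:
  assumes g: "grep G r s u v" and z: "op_le Z c"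
  shows "G \<bullet> Z \<le> c * (\<Sum>k<r. s k)"
proof -
  have "G \<bullet> Z = (\<Sum>k<r. s k * (outer (u k) (v k) \<bullet> Z))"
    using g by (simp add: grep_def inner_sum_left)
  also have "\<dots> = (\<Sum>k<r. s k * (Z \<bullet> outer (u k) (v k)))"
    by (simp add: inner_commute)
  also have "\<dots> \<le> (\<Sum>k<r. s k * c)"
  proof (rule sum_mono)
    fix k assume "k \<in> {..<r}"
    then have k: "k < r" by simp
    have "Z \<bullet> outer (u k) (v k) \<le> c"
      by (rule op_leD[OF z g k])
    then show "s k * (Z \<bullet> outer (u k) (v k)) \<le> s k * c"
      using g k by (intro mult_left_mono) (auto simp: grep_def)
  qed
  also have "\<dots> = c * (\<Sum>k<r. s k)" by (simp add: sum_distrib_left mult_ac)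
  finally show ?thesis .
qed

lemma pq_bound:
  fixes c p q C :: real
  assumes "\<bar>c\<bar> \<le> C"
  shows "c * (p * q) \<le> C * (p\<^sup>2 + q\<^sup>2) / 2"
proof -
  have h1: "(p - q)\<^sup>2 = p\<^sup>2 + q\<^sup>2 - 2 * (p * q)" by (simp add: power2_diff)
  have h2: "(p + q)\<^sup>2 = p\<^sup>2 + q\<^sup>2 + 2 * (p * q)" by (simp add: power2_sum)
  have pq: "2 * \<bar>p * q\<bar> \<le> p\<^sup>2 + q\<^sup>2"
    using h1 h2 zero_le_power2[of "p - q"] zero_le_power2[of "p + q"] by (simp add: abs_if)
  have "c * (p * q) \<le> \<bar>c\<bar> * \<bar>p * q\<bar>" by (simp add: abs_mult[symmetric])
  also have "\<dots> \<le> C * \<bar>p * q\<bar>" using assms by (intro mult_right_mono) auto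
  also have "\<dots> \<le> C * ((p\<^sup>2 + q\<^sup>2) / 2)"
    using pq assms by (intro mult_left_mono) auto
  finally show ?thesis by simp
qed

lemma R3:
  fixes u :: "nat \<Rightarrow> real^'m" and v :: "nat \<Rightarrow> real^'n"
  assumes ou: "onl r u" and ov: "onl r v" and c: "\<And>k. k < r \<Longrightarrow> \<bar>c k\<bar> \<le> C" and C: "0 \<le> C"
  shows "op_le (\<Sum>k<r. c k *\<^sub>R outer (u k) (v k)) C"
  unfolding op_le_def
proof (intro allI impI)
  fix a :: "real^'m" and b :: "real^'n" assume na: "norm a = 1" and nb: "norm b = 1"
  have "(\<Sum>k<r. c k *\<^sub>R outer (u k) (v k)) \<bullet> outer a b = (\<Sum>k<r. c k * (outer (u k) (v k) \<bullet> outer a b))"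
    by (simp add: inner_sum_left)
  also have "\<dots> = (\<Sum>k<r. c k * ((u k \<bullet> a) * (v k \<bullet> b)))"
    by (simp add: inner_outer)
  also have "\<dots> = (\<Sum>k<r. c k * ((a \<bullet> u k) * (b \<bullet> v k)))"
    by (simp add: inner_commute)
  also have "\<dots> \<le> (\<Sum>k<r. C * ((a \<bullet> u k)\<^sup>2 + (b \<bullet> v k)\<^sup>2) / 2)"
    by (rule sum_mono, rule pq_bound, simp add: c)
  also have "\<dots> = C / 2 * ((\<Sum>k<r. (a \<bullet> u k)\<^sup>2) + (\<Sum>k<r. (b \<bullet> v k)\<^sup>2))"
    by (simp add: sum_distrib_left sum.distrib[symmetric] field_simps)
  also have "\<dots> \<le> C / 2 * ((norm a)\<^sup>2 + (norm b)\<^sup>2)"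
    using bessel[OF ou, of a] bessel[OF ov, of b] C by (intro mult_left_mono add_mono) auto
  also have "\<dots> = C" using na nb by simp
  finally show "(\<Sum>k<r. c k *\<^sub>R outer (u k) (v k)) \<bullet> outer a b \<le> C" .
qed

lemma grep_inner_E: assumes g: "grep G r s u v" and k: "k < r" shows "G \<bullet> outer (u k) (v k) = s k"
proof -
  have "G = (\<Sum>k<r. s k *\<^sub>R outer (u k) (v k))" using g by (simp add: grep_def)
  then show ?thesis using sum_onl_single[OF grep_onl[OF g] k, of s] by simp
qed


lemma R4:
  assumes g: "grep G r s u v" and z: "op_le Z \<sigma>0"
  shows "(\<Sum>k<r. (max (s k - \<sigma>0) 0)\<^sup>2) \<le> (norm (G - Z))\<^sup>2"
proof -
  have "(\<Sum>k<r. (max (s k - \<sigma>0) 0)\<^sup>2) \<le> (\<Sum>k<r. ((G - Z) \<bullet> outer (u k) (v k))\<^sup>2)"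
  proof (rule sum_mono)
    fix k assume "k \<in> {..<r}"
    then have k: "k < r" by simp
    have zk: "Z \<bullet> outer (u k) (v k) \<le> \<sigma>0"
      by (rule op_leD[OF z g k])
    have e: "(G - Z) \<bullet> outer (u k) (v k) = s k - Z \<bullet> outer (u k) (v k)"
      using grep_inner_E[OF g k] by (simp add: inner_diff_left)
    show "(max (s k - \<sigma>0) 0)\<^sup>2 \<le> ((G - Z) \<bullet> outer (u k) (v k))\<^sup>2"
    proof (cases "s k - \<sigma>0 \<le> 0")
      case True then show ?thesis by simp
    next
      case False
      then show ?thesis unfolding e using zk by (intro power_mono) auto
    qed
  qed
  also have "\<dots> \<le> (norm (G - Z))\<^sup>2" by (rule bessel[OF grep_onl[OF g]])
  finally show ?thesis .
qed

lemma R5: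
  assumes g: "grep G r s u v" and s0: "0 \<le> \<sigma>0"
  defines "Z \<equiv> (\<Sum>k<r. min (s k) \<sigma>0 *\<^sub>R outer (u k) (v k))"
  shows "op_le Z \<sigma>0" and "(norm (G - Z))\<^sup>2 = (\<Sum>k<r. (max (s k - \<sigma>0) 0)\<^sup>2)"
proof -
  show "op_le Z \<sigma>0" unfolding Z_def
    by (rule R3) (use g s0 in \<open>auto simp: grep_def\<close>)
  have "G - Z = (\<Sum>k<r. max (s k - \<sigma>0) 0 *\<^sub>R outer (u k) (v k))"
  proof -
    have "G - Z = (\<Sum>k<r. (s k - min (s k) \<sigma>0) *\<^sub>R outer (u k) (v k))"
      using g by (simp add: grep_def Z_def sum_subtractf scaleR_diff_left)
    also have "\<dots> = (\<Sum>k<r. max (s k - \<sigma>0) 0 *\<^sub>R outer (u k) (v k))"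
      by (rule sum.cong) (auto simp: min_def max_def)
    finally show ?thesis .
  qed
  then show "(norm (G - Z))\<^sup>2 = (\<Sum>k<r. (max (s k - \<sigma>0) 0)\<^sup>2)"
    using norm_onl[OF grep_onl[OF g]] by simp
qed

lemma I1:
  assumes g1: "grep G r s u v" and g2: "grep G r' s' u' v'"
  shows "(\<Sum>k<r. s k) \<le> (\<Sum>k<r'. s' k)"
proof -
  define Z0 where "Z0 = (\<Sum>k<r. (1::real) *\<^sub>R outer (u k) (v k))"
  have "op_le Z0 1" unfolding Z0_def by (rule R3) (use g1 in \<open>auto simp: grep_def\<close>)
  then have "G \<bullet> Z0 \<le> 1 * (\<Sum>k<r'. s' k)" by (rule R2[OF g2])
  moreover have "G \<bullet> Z0 = (\<Sum>k<r. s k * 1)"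
    using g1 sum_onl[OF grep_onl[OF g1], of s "\<lambda>_. 1"] by (simp add: grep_def Z0_def)
  ultimately show ?thesis by simp
qed

lemma I2:
  assumes g1: "grep G r s u v" and g2: "grep G r' s' u' v'" and s0: "0 \<le> \<sigma>0"
  shows "(\<Sum>k<r. (max (s k - \<sigma>0) 0)\<^sup>2) \<le> (\<Sum>k<r'. (max (s' k - \<sigma>0) 0)\<^sup>2)"
  using R4[OF g1 R5(1)[OF g2 s0]] R5(2)[OF g2 s0] by simp

definition phi :: "real \<Rightarrow> real \<Rightarrow> real" where
  "phi \<sigma>0 s = \<sigma>0\<^sup>2 - (max (\<sigma>0 - s) 0)\<^sup>2"

lemma N_env_raw:
  "\<exists>r s u v. svd_rep X r s u v \<and> N_env \<sigma>0 F X = (\<Sum>k<r. phi \<sigma>0 (s k)) + (norm (X - F))\<^sup>2"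
proof -
  let ?P = "\<lambda>t. \<exists>r s u v. svd_rep X r s u v \<and> t = (\<Sum>k<r. \<sigma>0\<^sup>2 - (max (\<sigma>0 - s k) 0)\<^sup>2)"
  have "\<exists>t. ?P t" using svd_exists[of X] by blast
  then have "?P (SOME t. ?P t)" by (rule someI_ex)
  then obtain r s u v where sv: "svd_rep X r s u v"
    and t: "(SOME t. ?P t) = (\<Sum>k<r. \<sigma>0\<^sup>2 - (max (\<sigma>0 - s k) 0)\<^sup>2)" by blast
  have "N_env \<sigma>0 F X = (SOME t. ?P t) + (norm (X - F))\<^sup>2" by (simp add: N_env_def)
  then have "N_env \<sigma>0 F X = (\<Sum>k<r. phi \<sigma>0 (s k)) + (norm (X - F))\<^sup>2"
    using t by (simp add: phi_def)
  then show ?thesis using sv by blast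
qed

lemma phi_eq: "phi \<sigma>0 s = 2 * \<sigma>0 * s + (max (s - \<sigma>0) 0)\<^sup>2 - s\<^sup>2"
  by (simp add: phi_def max_def power2_eq_square algebra_simps)

lemma N_env_eq:
  assumes g: "grep X r s u v" and s0: "0 \<le> \<sigma>0"
  shows "N_env \<sigma>0 F X = 2 * \<sigma>0 * (\<Sum>k<r. s k) + (\<Sum>k<r. (max (s k - \<sigma>0) 0)\<^sup>2) - (norm X)\<^sup>2 + (norm (X - F))\<^sup>2"
proof -
  obtain r' s' u' v' where sv: "svd_rep X r' s' u' v'"
    and N: "N_env \<sigma>0 F X = (\<Sum>k<r'. phi \<sigma>0 (s' k)) + (norm (X - F))\<^sup>2"
    using N_env_raw by blast
  have g2: "grep X r' s' u' v'" by (rule svd_grep[OF sv])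
  have "(\<Sum>k<r'. phi \<sigma>0 (s' k)) = 2 * \<sigma>0 * (\<Sum>k<r'. s' k) + (\<Sum>k<r'. (max (s' k - \<sigma>0) 0)\<^sup>2) - (\<Sum>k<r'. (s' k)\<^sup>2)"
    by (simp add: phi_eq sum_subtractf sum.distrib sum_distrib_left)
  also have "(\<Sum>k<r'. (s' k)\<^sup>2) = (norm X)\<^sup>2" using R1[OF g2] by simp
  also have "(\<Sum>k<r'. s' k) = (\<Sum>k<r. s k)" using I1[OF g g2] I1[OF g2 g] by simp
  also have "(\<Sum>k<r'. (max (s' k - \<sigma>0) 0)\<^sup>2) = (\<Sum>k<r. (max (s k - \<sigma>0) 0)\<^sup>2)"
    using I2[OF g g2 s0] I2[OF g2 g s0] by simp
  finally show ?thesis using N by simp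
qed

lemma onl_card: "onl r (u :: nat \<Rightarrow> real^'m) \<Longrightarrow> r \<le> CARD('m)"
proof -
  assume o: "onl r u"
  have inj: "inj_on u {..<r}"
  proof (rule inj_onI)
    fix i j assume "i \<in> {..<r}" "j \<in> {..<r}" "u i = u j"
    then show "i = j" using o unfolding onl_def by (metis lessThan_iff zero_neq_one)
  qed
  have "independent (u ` {..<r})"
  proof (rule pairwise_orthogonal_independent)
    show "pairwise orthogonal (u ` {..<r})"
      using o by (auto simp: pairwise_def orthogonal_def onl_def)
    show "0 \<notin> u ` {..<r}"
    proof
      assume "0 \<in> u ` {..<r}"
      then obtain x where x: "x < r" "u x = 0" by auto
      have "u x \<bullet> u x = (if x = x then 1 else 0)" using o x(1) unfolding onl_def by blast
      then show False using x by simp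
    qed
  qed
  then have "card (u ` {..<r}) \<le> DIM(real^'m)" using independent_bound by blast
  then show ?thesis using card_image[OF inj] by simp
qed

lemma growth:
  fixes \<sigma>0 \<alpha> :: real
  assumes s0: "0 \<le> \<sigma>0" and al: "0 \<le> \<alpha>"
  shows "N_env \<sigma>0 F Y + \<alpha>/2 * (norm Y)\<^sup>2 \<le> (real CARD('m) * \<sigma>0\<^sup>2 + 2 * (norm F)\<^sup>2) + (2 + \<alpha>/2) * (norm (Y :: real^'n^'m))\<^sup>2"
proof -
  obtain r s u v where sv: "svd_rep Y r s u v"
    and N: "N_env \<sigma>0 F Y = (\<Sum>k<r. phi \<sigma>0 (s k)) + (norm (Y - F))\<^sup>2"
    using N_env_raw by blast
  have "r \<le> CARD('m)" using sv onl_card by (auto simp: svd_rep_def onl_def)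
  have "(\<Sum>k<r. phi \<sigma>0 (s k)) \<le> (\<Sum>k<r. \<sigma>0\<^sup>2)" by (rule sum_mono) (simp add: phi_def)
  also have "\<dots> = r * \<sigma>0\<^sup>2" by simp
  also have "\<dots> \<le> real CARD('m) * \<sigma>0\<^sup>2" using \<open>r \<le> CARD('m)\<close> by (intro mult_right_mono) auto
  finally have a: "(\<Sum>k<r. phi \<sigma>0 (s k)) \<le> real CARD('m) * \<sigma>0\<^sup>2" .
  have "norm (Y - F) \<le> norm Y + norm F" by (rule norm_triangle_ineq4)
  then have "(norm (Y - F))\<^sup>2 \<le> (norm Y + norm F)\<^sup>2" by (intro power_mono) auto
  also have "\<dots> \<le> 2 * (norm Y)\<^sup>2 + 2 * (norm F)\<^sup>2"
    using zero_le_power2[of "norm Y - norm F"] by (simp add: power2_sum power2_diff)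
  finally show ?thesis using a N by (simp add: algebra_simps)
qed



lemma spectral_rep:
  "\<exists>r s u v. svd_rep G r s u v \<and> spectral_map f G = (\<Sum>k<r. f (s k) *\<^sub>R outer (u k) (v k))"
proof -
  let ?P = "\<lambda>X. \<exists>r s u v. svd_rep G r s u v \<and> X = (\<Sum>k<r. f (s k) *\<^sub>R outer (u k) (v k))"
  have "\<exists>X. ?P X" using svd_exists[of G] by blast
  then have "?P (SOME X. ?P X)" by (rule someI_ex)
  then show ?thesis unfolding spectral_map_def by metis
qed

lemma f_props:
  fixes \<sigma>0 \<alpha> s :: real
  assumes s0: "\<sigma>0 > 0" and al: "\<alpha> > 0" and sp: "s \<ge> 0"
  defines "x \<equiv> f_alpha \<sigma>0 \<alpha> s"
  defines "w \<equiv> 2 * s - \<alpha> * x"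
  shows "x \<ge> 0" "min w (2 * \<sigma>0) + 2 * max (x - \<sigma>0) 0 = w" "0 \<le> min w (2 * \<sigma>0)"
    "x * min w (2 * \<sigma>0) = 2 * \<sigma>0 * x"
proof -
  consider (a) "s < \<sigma>0" | (b) "\<sigma>0 \<le> s" "s < (1 + \<alpha>/2) * \<sigma>0" | (c) "(1 + \<alpha>/2) * \<sigma>0 \<le> s"
    by linarith
  then have "x \<ge> 0 \<and> min w (2 * \<sigma>0) + 2 * max (x - \<sigma>0) 0 = w \<and> 0 \<le> min w (2 * \<sigma>0) \<and>
    x * min w (2 * \<sigma>0) = 2 * \<sigma>0 * x"
  proof cases
    case a
    then have "x = 0" by (simp add: x_def f_alpha_def)
    then show ?thesis using a sp s0 by (simp add: w_def)
  next
    case b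
    then have x: "x = (2/\<alpha>) * (s - \<sigma>0)" by (simp add: x_def f_alpha_def)
    then have ax: "\<alpha> * x = 2 * (s - \<sigma>0)" using al by simp
    have w: "w = 2 * \<sigma>0" using ax by (simp add: w_def)
    have x0: "x \<ge> 0" using x b al by simp
    have "\<alpha> * x < \<alpha> * \<sigma>0" using ax b by (simp add: algebra_simps)
    then have xs: "x < \<sigma>0" using al by simp
    show ?thesis using x0 xs w s0 by simp
  next
    case c
    have "\<alpha>/2*\<sigma>0 > 0" using al s0 by simp
    moreover have "(1+\<alpha>/2)*\<sigma>0 = \<sigma>0 + \<alpha>/2*\<sigma>0" by (simp add: algebra_simps)
    ultimately have ns: "\<not> s < \<sigma>0" using c by linarith
    have x: "x = s / (1 + \<alpha>/2)" using ns c by (simp add: x_def f_alpha_def)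
    have pos: "1 + \<alpha>/2 > 0" using al by simp
    then have sx: "s = (1 + \<alpha>/2) * x" using x by simp
    have w: "w = 2 * x" using sx by (simp add: w_def algebra_simps)
    have xs: "x \<ge> \<sigma>0" using c sx pos by (smt (verit) mult_le_cancel_left_pos)
    show ?thesis using w xs s0 by (simp add: min_def max_def)
  qed
  then show "x \<ge> 0" "min w (2 * \<sigma>0) + 2 * max (x - \<sigma>0) 0 = w" "0 \<le> min w (2 * \<sigma>0)"
    "x * min w (2 * \<sigma>0) = 2 * \<sigma>0 * x" by auto
qed

lemma norm_diff_sq: "(norm (a - b))\<^sup>2 = a \<bullet> a - 2 * (a \<bullet> b) + b \<bullet> (b::'a::real_inner)"
  unfolding power2_norm_eq_inner by (simp add: inner_diff_left inner_diff_right inner_commute)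

lemma SC_concrete:
  fixes F \<Lambda> Y :: "real^'n^'m" and \<sigma>0 \<alpha> :: real
  assumes s0: "\<sigma>0 > 0" and al: "\<alpha> > 0"
  defines "X \<equiv> spectral_map (f_alpha \<sigma>0 \<alpha>) (F - (1/2) *\<^sub>R \<Lambda>)"
  shows "(N_env \<sigma>0 F X + \<alpha>/2 * (norm X)\<^sup>2) + \<Lambda> \<bullet> X + \<alpha>/2 * (norm (Y - X))\<^sup>2
         \<le> (N_env \<sigma>0 F Y + \<alpha>/2 * (norm Y)\<^sup>2) + \<Lambda> \<bullet> Y"
proof -
  define G where "G = F - (1/2) *\<^sub>R \<Lambda>"
  obtain r s u v where sv: "svd_rep G r s u v"
    and Xe: "X = (\<Sum>k<r. f_alpha \<sigma>0 \<alpha> (s k) *\<^sub>R outer (u k) (v k))"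
    using spectral_rep[of G "f_alpha \<sigma>0 \<alpha>"] by (auto simp: X_def G_def)
  define x where "x k = f_alpha \<sigma>0 \<alpha> (s k)" for k
  define E where "E k = outer (u k) (v k)" for k
  define w where "w k = 2 * s k - \<alpha> * x k" for k
  define ca where "ca k = min (w k) (2 * \<sigma>0)" for k
  define m where "m k = max (x k - \<sigma>0) 0" for k
  have gG: "grep G r s u v" by (rule svd_grep[OF sv])
  have ou: "onl r u" and ov: "onl r v" and spos: "\<And>k. k < r \<Longrightarrow> s k \<ge> 0"
    using gG by (auto simp: grep_def)
  have oE: "onl r E" unfolding E_def by (rule onl_outer[OF ou ov])
  have fp: "x k \<ge> 0" "ca k + 2 * m k = w k" "0 \<le> ca k" "x k * ca k = 2 * \<sigma>0 * x k"
    if "k < r" for k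
    using f_props[OF s0 al spos[OF that]] by (simp_all add: x_def w_def ca_def m_def)
  have Ge: "G = (\<Sum>k<r. s k *\<^sub>R E k)" using gG by (simp add: grep_def E_def)
  have Xe': "X = (\<Sum>k<r. x k *\<^sub>R E k)" using Xe by (simp add: x_def E_def)
  have gX: "grep X r x u v" using fp(1) ou ov Xe' by (simp add: grep_def E_def)
  obtain r' t a b where svY: "svd_rep Y r' t a b" using svd_exists[of Y] by blast
  have gY: "grep Y r' t a b" by (rule svd_grep[OF svY])
  define Wa where "Wa = (\<Sum>k<r. ca k *\<^sub>R E k)"
  define e where "e = (\<Sum>k<r. m k *\<^sub>R E k)"
  define ZX where "ZX = (\<Sum>k<r. min (x k) \<sigma>0 *\<^sub>R E k)"
  define ZY where "ZY = (\<Sum>k<r'. min (t k) \<sigma>0 *\<^sub>R outer (a k) (b k))"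
  define QX where "QX = (\<Sum>k<r. (max (x k - \<sigma>0) 0)\<^sup>2)"
  define QY where "QY = (\<Sum>k<r'. (max (t k - \<sigma>0) 0)\<^sup>2)"
  have NX: "N_env \<sigma>0 F X = 2 * \<sigma>0 * (\<Sum>k<r. x k) + QX - (norm X)\<^sup>2 + (norm (X - F))\<^sup>2"
    using N_env_eq[OF gX, of \<sigma>0 F] s0 by (simp add: QX_def)
  have NY: "N_env \<sigma>0 F Y = 2 * \<sigma>0 * (\<Sum>k<r'. t k) + QY - (norm Y)\<^sup>2 + (norm (Y - F))\<^sup>2"
    using N_env_eq[OF gY, of \<sigma>0 F] s0 by (simp add: QY_def)
  have opWa: "op_le Wa (2 * \<sigma>0)"
  proof -
    have "\<bar>ca k\<bar> \<le> 2 * \<sigma>0" if "k < r" for k using fp(3)[OF that] by (simp add: ca_def)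
    then show ?thesis unfolding Wa_def E_def by (rule R3[OF ou ov]) (use s0 in auto)
  qed
  have i: "Y \<bullet> Wa \<le> 2 * \<sigma>0 * (\<Sum>k<r'. t k)" using R2[OF gY opWa] .
  have ii: "X \<bullet> Wa = 2 * \<sigma>0 * (\<Sum>k<r. x k)"
  proof -
    have "X \<bullet> Wa = (\<Sum>k<r. x k * ca k)" unfolding Xe' Wa_def by (rule sum_onl[OF oE])
    also have "\<dots> = (\<Sum>k<r. 2 * \<sigma>0 * x k)" by (rule sum.cong) (simp_all add: fp)
    finally show ?thesis by (simp add: sum_distrib_left)
  qed
  have ZY1: "op_le ZY \<sigma>0" and ZY2: "(norm (Y - ZY))\<^sup>2 = QY"
    using R5[OF gY, of \<sigma>0] s0 by (simp_all add: ZY_def QY_def)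
  have QXe: "QX = e \<bullet> e"
    unfolding e_def using sum_onl[OF oE, of m m] by (simp add: QX_def m_def power2_eq_square)
  have ge: "grep e r m u v" using ou ov by (simp add: grep_def m_def e_def E_def)
  have eZY: "e \<bullet> ZY \<le> \<sigma>0 * (\<Sum>k<r. m k)" by (rule R2[OF ge ZY1])
  have ZXe: "ZX \<bullet> e = \<sigma>0 * (\<Sum>k<r. m k)"
  proof -
    have "ZX \<bullet> e = (\<Sum>k<r. min (x k) \<sigma>0 * m k)" unfolding ZX_def e_def by (rule sum_onl[OF oE])
    also have "\<dots> = (\<Sum>k<r. \<sigma>0 * m k)" by (rule sum.cong) (auto simp: m_def min_def max_def)
    finally show ?thesis by (simp add: sum_distrib_left)
  qed
  have XZX: "X - ZX = e"
  proof -
    have "X - ZX = (\<Sum>k<r. (x k - min (x k) \<sigma>0) *\<^sub>R E k)"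
      by (simp add: Xe' ZX_def sum_subtractf scaleR_diff_left)
    also have "\<dots> = e" unfolding e_def by (rule sum.cong) (auto simp: m_def min_def max_def)
    finally show ?thesis .
  qed
  have iii: "QY \<ge> QX + 2 * (Y \<bullet> e) - 2 * (X \<bullet> e)"
  proof -
    define dd where "dd = (Y - X) - (ZY - ZX)"
    have "Y - ZY = e + dd" using XZX by (simp add: dd_def algebra_simps)
    then have "QY = (e + dd) \<bullet> (e + dd)" using ZY2 by (simp add: power2_norm_eq_inner)
    also have "\<dots> = e \<bullet> e + 2 * (e \<bullet> dd) + dd \<bullet> dd"
      by (simp add: inner_add_left inner_add_right inner_commute)
    finally have "QY \<ge> e \<bullet> e + 2 * (e \<bullet> dd)" by simp
    moreover have "e \<bullet> dd = e \<bullet> Y - e \<bullet> X - e \<bullet> ZY + e \<bullet> ZX"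
      by (simp add: dd_def inner_diff_right)
    moreover have "e \<bullet> ZX = ZX \<bullet> e" "e \<bullet> Y = Y \<bullet> e" "e \<bullet> X = X \<bullet> e" by (simp_all add: inner_commute)
    ultimately show ?thesis using QXe eZY ZXe by linarith
  qed
  have iv: "Wa + 2 *\<^sub>R e = 2 *\<^sub>R G - \<alpha> *\<^sub>R X"
  proof -
    have "Wa + 2 *\<^sub>R e = (\<Sum>k<r. (ca k + 2 * m k) *\<^sub>R E k)"
      by (simp add: Wa_def e_def scaleR_sum_right sum.distrib[symmetric] scaleR_add_left)
    also have "\<dots> = (\<Sum>k<r. (2 * s k - \<alpha> * x k) *\<^sub>R E k)"
      by (rule sum.cong) (simp_all add: fp w_def)
    also have "\<dots> = 2 *\<^sub>R G - \<alpha> *\<^sub>R X"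
      by (simp add: Ge Xe' scaleR_sum_right sum_subtractf scaleR_diff_left)
    finally show ?thesis .
  qed
  have ivY: "Y \<bullet> Wa + 2 * (Y \<bullet> e) = 2 * (Y \<bullet> G) - \<alpha> * (Y \<bullet> X)"
    using arg_cong[OF iv, of "\<lambda>z. Y \<bullet> z"] by (simp add: inner_add_right inner_diff_right)
  have ivX: "X \<bullet> Wa + 2 * (X \<bullet> e) = 2 * (X \<bullet> G) - \<alpha> * (X \<bullet> X)"
    using arg_cong[OF iv, of "\<lambda>z. X \<bullet> z"] by (simp add: inner_add_right inner_diff_right)
  have Lam: "\<Lambda> = 2 *\<^sub>R F - 2 *\<^sub>R G" by (simp add: G_def algebra_simps)
  have LX0: "\<Lambda> \<bullet> X = 2 * (F \<bullet> X) - 2 * (G \<bullet> X)"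
    unfolding Lam inner_diff_left inner_scaleR_left by simp
  have LY0: "\<Lambda> \<bullet> Y = 2 * (F \<bullet> Y) - 2 * (G \<bullet> Y)"
    unfolding Lam inner_diff_left inner_scaleR_left by simp
  have cm: "F \<bullet> X = X \<bullet> F" "G \<bullet> X = X \<bullet> G" "F \<bullet> Y = Y \<bullet> F" "G \<bullet> Y = Y \<bullet> G"
    by (rule inner_commute)+
  have LX: "\<Lambda> \<bullet> X = 2 * (X \<bullet> F) - 2 * (X \<bullet> G)" using LX0 cm by simp
  have LY: "\<Lambda> \<bullet> Y = 2 * (Y \<bullet> F) - 2 * (Y \<bullet> G)" using LY0 cm by simp
  have n1: "(norm (X - F))\<^sup>2 = X \<bullet> X - 2 * (X \<bullet> F) + F \<bullet> F" by (rule norm_diff_sq)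
  have n2: "(norm (Y - F))\<^sup>2 = Y \<bullet> Y - 2 * (Y \<bullet> F) + F \<bullet> F" by (rule norm_diff_sq)
  have n3: "(norm (Y - X))\<^sup>2 = Y \<bullet> Y - 2 * (Y \<bullet> X) + X \<bullet> X" by (rule norm_diff_sq)
  have n4: "(norm X)\<^sup>2 = X \<bullet> X" "(norm Y)\<^sup>2 = Y \<bullet> Y" by (simp_all add: power2_norm_eq_inner)
  have m3: "\<alpha>/2 * (norm (Y - X))\<^sup>2 = \<alpha>/2 * (Y \<bullet> Y) - \<alpha> * (Y \<bullet> X) + \<alpha>/2 * (X \<bullet> X)"
    by (simp add: n3 algebra_simps)
  have m4: "\<alpha>/2 * (norm X)\<^sup>2 = \<alpha>/2 * (X \<bullet> X)" "\<alpha>/2 * (norm Y)\<^sup>2 = \<alpha>/2 * (Y \<bullet> Y)"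
    by (simp_all add: n4)
  have m5: "\<alpha> * (X \<bullet> X) = \<alpha>/2 * (X \<bullet> X) + \<alpha>/2 * (X \<bullet> X)" by simp
  show ?thesis
    using NX NY i ii iii ivY ivX LX LY n1 n2 n4 m3 m4 m5 by linarith
qed



lemma abstract_uzawa:
  fixes \<Phi> :: "'a::euclidean_space \<Rightarrow> real" and Xf :: "'a \<Rightarrow> 'a"
    and M :: "'a set" and P :: "'a \<Rightarrow> 'a" and X L :: "nat \<Rightarrow> 'a"
  assumes M: "subspace M" and al: "\<alpha> > 0"
    and SC: "\<And>\<Lambda> Y. \<Phi> (Xf \<Lambda>) + \<Lambda> \<bullet> Xf \<Lambda> + \<alpha>/2 * (norm (Y - Xf \<Lambda>))\<^sup>2 \<le> \<Phi> Y + \<Lambda> \<bullet> Y"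
    and growth: "\<And>Y. \<Phi> Y \<le> A + B * (norm Y)\<^sup>2" and B: "B > 0"
    and P1: "\<And>x z. z \<in> M \<Longrightarrow> P x \<bullet> z = 0"
    and P2: "\<And>x. x - P x \<in> M"
    and L0: "L 0 = 0"
    and XS: "\<And>n. X (Suc n) = Xf (L n)"
    and LS: "\<And>n. L (Suc n) = L n + \<alpha> *\<^sub>R P (X (Suc n))"
  shows "\<exists>Xs Ls. X \<longlonglongrightarrow> Xs \<and> L \<longlonglongrightarrow> Ls \<and> Xs \<in> M \<and> (\<forall>Y\<in>M. \<Phi> Xs \<le> \<Phi> Y)"
proof -
  define Mp where "Mp = {y. \<forall>z\<in>M. y \<bullet> z = 0}"
  have Mp_sub: "subspace Mp"
    unfolding Mp_def subspace_def by (auto simp: inner_add_left)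
  have Mp_closed: "closed Mp"
    by (rule closed_subspace[OF Mp_sub])
  have PMp: "P x \<in> Mp" for x using P1 by (auto simp: Mp_def)
  have LMp: "L n \<in> Mp" for n
    by (induction n) (auto simp: L0 LS Mp_sub subspace_0 subspace_add subspace_scale PMp)
  define d where "d \<Lambda> = \<Phi> (Xf \<Lambda>) + \<Lambda> \<bullet> Xf \<Lambda>" for \<Lambda>
  have dle: "d \<Lambda> \<le> \<Phi> Y + \<Lambda> \<bullet> Y" for \<Lambda> Y
  proof -
    have nn: "0 \<le> \<alpha>/2 * (norm (Y - Xf \<Lambda>))\<^sup>2" using al by simp
    show ?thesis using SC[of \<Lambda> Y] nn unfolding d_def by linarith
  qed
  have L1: "\<alpha> * (norm (Xf \<Lambda> - Xf \<Lambda>'))\<^sup>2 \<le> (\<Lambda>' - \<Lambda>) \<bullet> (Xf \<Lambda> - Xf \<Lambda>')" for \<Lambda> \<Lambda>'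
  proof -
    have a: "\<Phi> (Xf \<Lambda>) + \<Lambda> \<bullet> Xf \<Lambda> + \<alpha>/2 * (norm (Xf \<Lambda>' - Xf \<Lambda>))\<^sup>2 \<le> \<Phi> (Xf \<Lambda>') + \<Lambda> \<bullet> Xf \<Lambda>'"
      by (rule SC)
    have b: "\<Phi> (Xf \<Lambda>') + \<Lambda>' \<bullet> Xf \<Lambda>' + \<alpha>/2 * (norm (Xf \<Lambda> - Xf \<Lambda>'))\<^sup>2 \<le> \<Phi> (Xf \<Lambda>) + \<Lambda>' \<bullet> Xf \<Lambda>"
      by (rule SC)
    have "norm (Xf \<Lambda>' - Xf \<Lambda>) = norm (Xf \<Lambda> - Xf \<Lambda>')" by (rule norm_minus_commute)
    with a b show ?thesis by (simp add: inner_diff_left inner_diff_right algebra_simps)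
  qed
  have Lip: "norm (Xf \<Lambda> - Xf \<Lambda>') \<le> norm (\<Lambda> - \<Lambda>') / \<alpha>" for \<Lambda> \<Lambda>'
  proof -
    have "\<alpha> * (norm (Xf \<Lambda> - Xf \<Lambda>'))\<^sup>2 \<le> norm (\<Lambda>' - \<Lambda>) * norm (Xf \<Lambda> - Xf \<Lambda>')"
      using L1[of \<Lambda> \<Lambda>'] Cauchy_Schwarz_ineq2[of "\<Lambda>' - \<Lambda>" "Xf \<Lambda> - Xf \<Lambda>'"] by linarith
    then have "\<alpha> * norm (Xf \<Lambda> - Xf \<Lambda>') \<le> norm (\<Lambda> - \<Lambda>')"
      by (cases "norm (Xf \<Lambda> - Xf \<Lambda>') = 0") (auto simp: power2_eq_square norm_minus_commute)
    then show ?thesis using al by (simp add: field_simps)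
  qed
  have Xf_cont: "continuous_on UNIV Xf"
    unfolding continuous_on_iff
  proof (intro ballI allI impI)
    fix x e assume "(e::real) > 0"
    show "\<exists>dd>0. \<forall>x'\<in>UNIV. dist x' x < dd \<longrightarrow> dist (Xf x') (Xf x) < e"
    proof (rule exI[of _ "\<alpha> * e"], intro conjI ballI impI)
      show "\<alpha> * e > 0" using \<open>e>0\<close> al by simp
      fix x' assume "dist x' x < \<alpha> * e"
      then have "norm (x' - x) / \<alpha> < e" using al by (simp add: dist_norm field_simps)
      then show "dist (Xf x') (Xf x) < e" using Lip[of x' x] by (simp add: dist_norm)
    qed
  qed
  have L2: "d \<Lambda>' \<le> d \<Lambda> + (\<Lambda>' - \<Lambda>) \<bullet> Xf \<Lambda>" for \<Lambda> \<Lambda>'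
  proof -
    have s: "\<Phi> (Xf \<Lambda>') + \<Lambda>' \<bullet> Xf \<Lambda>' + \<alpha>/2 * (norm (Xf \<Lambda> - Xf \<Lambda>'))\<^sup>2 \<le> \<Phi> (Xf \<Lambda>) + \<Lambda>' \<bullet> Xf \<Lambda>"
      by (rule SC)
    have nn: "0 \<le> \<alpha>/2 * (norm (Xf \<Lambda> - Xf \<Lambda>'))\<^sup>2" using al by simp
    from s nn have "d \<Lambda>' \<le> \<Phi> (Xf \<Lambda>) + \<Lambda>' \<bullet> Xf \<Lambda>" unfolding d_def by linarith
    then show ?thesis by (simp add: d_def inner_diff_left)
  qed
  have L3: "d \<Lambda>' \<ge> d \<Lambda> + (\<Lambda>' - \<Lambda>) \<bullet> Xf \<Lambda> - (norm (\<Lambda>' - \<Lambda>))\<^sup>2 / \<alpha>" for \<Lambda> \<Lambda>'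
  proof -
    have a: "d \<Lambda> \<le> \<Phi> (Xf \<Lambda>') + \<Lambda> \<bullet> Xf \<Lambda>'"
      using SC[of \<Lambda> "Xf \<Lambda>'"] al unfolding d_def
      by (smt (verit) zero_le_power2 mult_nonneg_nonneg divide_nonneg_pos)
    have "(\<Lambda>' - \<Lambda>) \<bullet> (Xf \<Lambda>' - Xf \<Lambda>) \<ge> - (norm (\<Lambda>' - \<Lambda>) * norm (Xf \<Lambda>' - Xf \<Lambda>))"
      using Cauchy_Schwarz_ineq2[of "\<Lambda>' - \<Lambda>" "Xf \<Lambda>' - Xf \<Lambda>"] by linarith
    moreover have "norm (\<Lambda>' - \<Lambda>) * norm (Xf \<Lambda>' - Xf \<Lambda>) \<le> norm (\<Lambda>' - \<Lambda>) * (norm (\<Lambda>' - \<Lambda>) / \<alpha>)"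
      by (rule mult_left_mono[OF Lip]) simp
    ultimately have "(\<Lambda>' - \<Lambda>) \<bullet> (Xf \<Lambda>' - Xf \<Lambda>) \<ge> - ((norm (\<Lambda>' - \<Lambda>))\<^sup>2 / \<alpha>)"
      by (simp add: power2_eq_square)
    with a show ?thesis by (simp add: d_def inner_diff_left inner_diff_right algebra_simps)
  qed
  have d_cont: "continuous_on UNIV d"
    unfolding continuous_on_def
  proof
    fix x :: 'a
    have "((\<lambda>y. d y - d x) \<longlongrightarrow> 0) (at x within UNIV)"
    proof (rule Lim_null_comparison)
      show "\<forall>\<^sub>F y in at x within UNIV. norm (d y - d x) \<le> norm (y - x) * norm (Xf x) + (norm (y - x))\<^sup>2 / \<alpha>"
      proof (rule always_eventually, rule allI)
        fix y
        have u: "d y - d x \<le> norm (y - x) * norm (Xf x)"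
          using L2[where \<Lambda>=x and \<Lambda>'=y] Cauchy_Schwarz_ineq2[of "y - x" "Xf x"] by linarith
        have l: "d y - d x \<ge> - (norm (y - x) * norm (Xf x)) - (norm (y - x))\<^sup>2 / \<alpha>"
          using L3[where \<Lambda>=x and \<Lambda>'=y] Cauchy_Schwarz_ineq2[of "y - x" "Xf x"] by (smt (verit) abs_le_iff)
        have "0 \<le> (norm (y - x))\<^sup>2 / \<alpha>" using al by simp
        then show "norm (d y - d x) \<le> norm (y - x) * norm (Xf x) + (norm (y - x))\<^sup>2 / \<alpha>"
          using u l by (simp add: abs_le_iff)
      qed
      show "((\<lambda>y. norm (y - x) * norm (Xf x) + (norm (y - x))\<^sup>2 / \<alpha>) \<longlongrightarrow> 0) (at x within UNIV)"
      proof -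
        have "((\<lambda>y. norm (y - x) * norm (Xf x) + (norm (y - x))\<^sup>2 / \<alpha>) \<longlongrightarrow>
               norm (x - x) * norm (Xf x) + (norm (x - x))\<^sup>2 / \<alpha>) (at x within UNIV)"
          using al by (intro tendsto_intros) auto
        then show ?thesis by simp
      qed
    qed
    then show "(d \<longlongrightarrow> d x) (at x within UNIV)"
      by (simp add: Lim_null[symmetric])
  qed
  have coer: "d \<Lambda> \<le> A - (norm \<Lambda>)\<^sup>2 / (4 * B)" for \<Lambda>
  proof -
    define c where "c = 1 / (2 * B)"
    have "d \<Lambda> \<le> \<Phi> (- c *\<^sub>R \<Lambda>) + \<Lambda> \<bullet> (- c *\<^sub>R \<Lambda>)"
      by (rule dle)
    also have "\<dots> \<le> A + B * (c * norm \<Lambda>)\<^sup>2 - c * (norm \<Lambda>)\<^sup>2"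
      using growth[of "- c *\<^sub>R \<Lambda>"] B by (simp add: c_def power2_norm_eq_inner[symmetric] abs_mult)
    also have "\<dots> = A - (norm \<Lambda>)\<^sup>2 / (4 * B)"
      using B by (simp add: c_def field_simps power2_eq_square)
    finally show ?thesis .
  qed
  define K where "K = Mp \<inter> {\<Lambda>. d 0 \<le> d \<Lambda>}"
  have K_comp: "compact K"
  proof -
    have cl: "closed K" unfolding K_def
      by (intro closed_Int Mp_closed closed_Collect_le continuous_on_const d_cont)
    have "norm \<Lambda> \<le> sqrt (4 * B * \<bar>A - d 0\<bar>)" if "\<Lambda> \<in> K" for \<Lambda>
    proof -
      have "(norm \<Lambda>)\<^sup>2 / (4 * B) \<le> A - d 0" using coer[of \<Lambda>] that by (simp add: K_def)
      then have "(norm \<Lambda>)\<^sup>2 \<le> 4 * B * (A - d 0)" using B by (simp add: field_simps)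
      moreover have "4 * B * (A - d 0) \<le> 4 * B * \<bar>A - d 0\<bar>" using B by (intro mult_left_mono) auto
      ultimately have "(norm \<Lambda>)\<^sup>2 \<le> 4 * B * \<bar>A - d 0\<bar>" by linarith
      then show ?thesis by (simp add: real_le_rsqrt)
    qed
    then have "bounded K" by (auto simp: bounded_iff)
    with cl show ?thesis by (simp add: compact_eq_bounded_closed)
  qed
  have "0 \<in> K" by (simp add: K_def Mp_def)
  then obtain Ls where LsK: "Ls \<in> K" and Lsmax: "\<And>y. y \<in> K \<Longrightarrow> d y \<le> d Ls"
    using continuous_attains_sup[OF K_comp _ continuous_on_subset[OF d_cont]] by blast
  have Lsmax': "d y \<le> d Ls" if "y \<in> Mp" for y
  proof (cases "y \<in> K")
    case True then show ?thesis by (rule Lsmax)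
  next
    case False
    then have "d y < d 0" using that by (auto simp: K_def)
    also have "d 0 \<le> d Ls" using LsK by (simp add: K_def)
    finally show ?thesis by simp
  qed
  have LsMp: "Ls \<in> Mp" using LsK by (simp add: K_def)
  have XsM: "Xf Ls \<in> M"
  proof -
    define p where "p = P (Xf Ls)"
    have pMp: "p \<in> Mp" by (simp add: p_def PMp)
    have pp: "p \<bullet> Xf Ls = p \<bullet> p"
    proof -
      have "p \<bullet> (Xf Ls - p) = 0" using P1[OF P2[of "Xf Ls"]] by (simp add: p_def)
      then show ?thesis by (simp add: inner_diff_right)
    qed
    have "Ls + (\<alpha>/2) *\<^sub>R p \<in> Mp"
      using LsMp pMp Mp_sub by (simp add: subspace_add subspace_scale)
    then have "d (Ls + (\<alpha>/2) *\<^sub>R p) \<le> d Ls" by (rule Lsmax')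
    moreover have "d (Ls + (\<alpha>/2) *\<^sub>R p) \<ge> d Ls + (\<alpha>/2) * (p \<bullet> p) - (\<alpha>/2)\<^sup>2 * (p \<bullet> p) / \<alpha>"
    proof -
      have h: "d (Ls + (\<alpha>/2) *\<^sub>R p) \<ge> d Ls + ((\<alpha>/2) *\<^sub>R p) \<bullet> Xf Ls - (norm ((\<alpha>/2) *\<^sub>R p))\<^sup>2 / \<alpha>"
        using L3[where \<Lambda>=Ls and \<Lambda>'="Ls + (\<alpha>/2) *\<^sub>R p"] by simp
      have hn: "(norm ((\<alpha>/2) *\<^sub>R p))\<^sup>2 = (\<alpha>/2)\<^sup>2 * (p \<bullet> p)"
        by (simp add: power_mult_distrib power2_norm_eq_inner[symmetric] power_divide)
      show ?thesis using h hn pp by simp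
    qed
    ultimately have "(\<alpha>/2) * (p \<bullet> p) - (\<alpha>/2)\<^sup>2 * (p \<bullet> p) / \<alpha> \<le> 0" by linarith
    then have "\<alpha> / 4 * (p \<bullet> p) \<le> 0" using al by (simp add: power2_eq_square field_simps)
    then have "p \<bullet> p \<le> 0" using al by (simp add: mult_le_0_iff)
    then have "p = 0" by (metis inner_eq_zero_iff inner_ge_zero order_antisym)
    then show ?thesis using P2[of "Xf Ls"] by (simp add: p_def)
  qed
  \<comment> \<open>Fejer monotonicity wrt any saddle point\<close>
  have fejer: "(norm (L (Suc n) - S))\<^sup>2 \<le> (norm (L n - S))\<^sup>2 - \<alpha>\<^sup>2 * (norm (X (Suc n) - Xf S))\<^sup>2"
    if SMp: "S \<in> Mp" and SM: "Xf S \<in> M" for S n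
  proof -
    define D where "D = X (Suc n) - Xf S"
    define x where "x = X (Suc n)"
    define q where "q = P x"
    have dMp: "L n - S \<in> Mp" using LMp SMp Mp_sub by (simp add: subspace_diff)
    have orth: "a \<bullet> m = 0" if "a \<in> Mp" "m \<in> M" for a m using that by (simp add: Mp_def)
    have e1: "(L n - S) \<bullet> q = (L n - S) \<bullet> D"
    proof -
      have "(L n - S) \<bullet> (x - q) = 0" using orth[OF dMp P2[of x]] by (simp add: q_def)
      moreover have "(L n - S) \<bullet> Xf S = 0" using orth[OF dMp SM] .
      ultimately show ?thesis by (simp add: D_def x_def inner_diff_right)
    qed
    have e2: "(L n - S) \<bullet> D \<le> - \<alpha> * (norm D)\<^sup>2"
      using L1[of "L n" S] by (simp add: D_def XS inner_diff_left inner_diff_right algebra_simps)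
    have e3: "norm q \<le> norm D"
    proof -
      have "q \<bullet> q = q \<bullet> D"
      proof -
        have "q \<bullet> (x - q) = 0" using P1[OF P2[of x]] by (simp add: q_def)
        moreover have "q \<bullet> Xf S = 0" using P1[OF SM] by (simp add: q_def)
        ultimately show ?thesis by (simp add: D_def x_def inner_diff_right)
      qed
      then have "(norm q)\<^sup>2 \<le> norm q * norm D"
        using Cauchy_Schwarz_ineq2[of q D] by (simp add: power2_norm_eq_inner)
      then show ?thesis
        by (cases "norm q = 0") (auto simp: power2_eq_square)
    qed
    have "L (Suc n) - S = (L n - S) + \<alpha> *\<^sub>R q" by (simp add: LS q_def x_def)
    then have "(norm (L (Suc n) - S))\<^sup>2 = (norm (L n - S))\<^sup>2 + 2 * \<alpha> * ((L n - S) \<bullet> q) + \<alpha>\<^sup>2 * (norm q)\<^sup>2"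
    proof -
      assume h: "L (Suc n) - S = (L n - S) + \<alpha> *\<^sub>R q"
      define a where "a = L n - S"
      have "(norm (a + \<alpha> *\<^sub>R q))\<^sup>2 = (norm a)\<^sup>2 + 2 * \<alpha> * (a \<bullet> q) + \<alpha>\<^sup>2 * (norm q)\<^sup>2"
        unfolding power2_norm_eq_inner
        by (simp add: inner_add_left inner_add_right inner_commute power2_eq_square algebra_simps)
      then show ?thesis using h by (simp only: a_def)
    qed
    also have "\<dots> \<le> (norm (L n - S))\<^sup>2 - 2 * \<alpha>\<^sup>2 * (norm D)\<^sup>2 + \<alpha>\<^sup>2 * (norm D)\<^sup>2"
    proof -
      have h1: "2 * \<alpha> * ((L n - S) \<bullet> q) \<le> 2 * \<alpha> * (- \<alpha> * (norm D)\<^sup>2)"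
        unfolding e1 using e2 al by (intro mult_left_mono) auto
      have h1': "2 * \<alpha> * (- \<alpha> * (norm D)\<^sup>2) = - 2 * \<alpha>\<^sup>2 * (norm D)\<^sup>2"
        by (simp add: power2_eq_square)
      have "(norm q)\<^sup>2 \<le> (norm D)\<^sup>2" using e3 by (simp add: power_mono)
      then have h2: "\<alpha>\<^sup>2 * (norm q)\<^sup>2 \<le> \<alpha>\<^sup>2 * (norm D)\<^sup>2"
        by (rule mult_left_mono) simp
      show ?thesis using h1 h1' h2 by linarith
    qed
    finally show ?thesis by (simp add: D_def)
  qed
  define e where "e n = (norm (L n - Ls))\<^sup>2" for n
  have edec: "decseq e"
    unfolding decseq_Suc_iff
  proof
    fix n
    have "0 \<le> \<alpha>\<^sup>2 * (norm (X (Suc n) - Xf Ls))\<^sup>2" by simp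
    then show "e (Suc n) \<le> e n" using fejer[OF LsMp XsM, of n] unfolding e_def by linarith
  qed
  obtain Le where eL: "e \<longlonglongrightarrow> Le" using decseq_convergent[OF edec, of 0] by (auto simp: e_def)
  have eS: "(\<lambda>n. e (Suc n)) \<longlonglongrightarrow> Le" by (rule LIMSEQ_Suc[OF eL])
  have "(\<lambda>n. e n - e (Suc n)) \<longlonglongrightarrow> Le - Le" by (rule tendsto_diff[OF eL eS])
  then have glim: "(\<lambda>n. (e n - e (Suc n)) / \<alpha>\<^sup>2) \<longlonglongrightarrow> 0"
    by (intro tendsto_divide_zero) simp
  have bnd: "norm ((norm (X (Suc n) - Xf Ls))\<^sup>2) \<le> (e n - e (Suc n)) / \<alpha>\<^sup>2" for n
  proof -
    have "\<alpha>\<^sup>2 * (norm (X (Suc n) - Xf Ls))\<^sup>2 \<le> e n - e (Suc n)"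
      using fejer[OF LsMp XsM, of n] unfolding e_def by linarith
    then have "(norm (X (Suc n) - Xf Ls))\<^sup>2 \<le> (e n - e (Suc n)) / \<alpha>\<^sup>2"
      using al by (simp add: field_simps)
    then show ?thesis by simp
  qed
  have "(\<lambda>n. (norm (X (Suc n) - Xf Ls))\<^sup>2) \<longlonglongrightarrow> 0"
    by (rule Lim_null_comparison[OF always_eventually glim]) (use bnd in blast)
  then have "(\<lambda>n. sqrt ((norm (X (Suc n) - Xf Ls))\<^sup>2)) \<longlonglongrightarrow> sqrt 0"
    by (rule tendsto_real_sqrt)
  then have "(\<lambda>n. norm (X (Suc n) - Xf Ls)) \<longlonglongrightarrow> 0" by simp
  then have "(\<lambda>n. X (Suc n) - Xf Ls) \<longlonglongrightarrow> 0" by (simp only: tendsto_norm_zero_iff)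
  then have "(\<lambda>n. X (Suc n)) \<longlonglongrightarrow> Xf Ls" by (simp only: LIM_zero_iff)
  then have Xconv: "X \<longlonglongrightarrow> Xf Ls" by (simp only: filterlim_sequentially_Suc)
  have "bounded (range L)"
  proof -
    have "norm (L n) \<le> norm Ls + sqrt (e 0)" for n
    proof -
      have "e n \<le> e 0" using edec by (simp add: decseq_def)
      then have "norm (L n - Ls) \<le> sqrt (e 0)" by (simp add: e_def real_le_rsqrt)
      then show ?thesis using norm_triangle_ineq2[of "L n" Ls] by linarith
    qed
    then show ?thesis by (auto simp: bounded_iff)
  qed
  then obtain Lb r where r: "strict_mono r" and Lr: "(L \<circ> r) \<longlonglongrightarrow> Lb"
    using bounded_imp_convergent_subsequence by blast
  have LbMp: "Lb \<in> Mp"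
    by (rule closed_sequentially[OF Mp_closed _ Lr]) (simp add: LMp)
  have "(Xf \<circ> (L \<circ> r)) \<longlonglongrightarrow> Xf Lb"
    using continuous_on_tendsto_compose[OF Xf_cont Lr] by (simp add: comp_def)
  moreover have "(Xf \<circ> (L \<circ> r)) \<longlonglongrightarrow> Xf Ls"
  proof -
    have "((\<lambda>n. X (Suc n)) \<circ> r) \<longlonglongrightarrow> Xf Ls"
      by (rule LIMSEQ_subseq_LIMSEQ[OF _ r]) (use Xconv in \<open>simp add: filterlim_sequentially_Suc\<close>)
    then show ?thesis by (simp only: comp_def XS)
  qed
  ultimately have XLb: "Xf Lb = Xf Ls" using LIMSEQ_unique by blast
  have LbM: "Xf Lb \<in> M" using XsM XLb by simp
  define e' where "e' n = norm (L n - Lb)" for n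
  have e'dec: "e' (Suc n) \<le> e' n" for n
  proof -
    have "0 \<le> \<alpha>\<^sup>2 * (norm (X (Suc n) - Xf Lb))\<^sup>2" by simp
    then have "(e' (Suc n))\<^sup>2 \<le> (e' n)\<^sup>2" using fejer[OF LbMp LbM, of n] unfolding e'_def by linarith
    then show ?thesis by (simp add: e'_def power2_le_iff_abs_le)
  qed
  have e'mono: "m \<le> n \<Longrightarrow> e' n \<le> e' m" for m n
    by (rule lift_Suc_antimono_le[of e', OF e'dec])
  have "(\<lambda>k. L (r k) - Lb) \<longlonglongrightarrow> 0" using Lr by (simp add: o_def LIM_zero)
  have Lconv: "L \<longlonglongrightarrow> Lb"
  proof (rule LIMSEQ_I)
    fix eps :: real assume "eps > 0"
    from Lr have "(\<lambda>k. L (r k)) \<longlonglongrightarrow> Lb" by (simp add: o_def)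
    then obtain k where k: "norm (L (r k) - Lb) < eps"
      using LIMSEQ_D[OF _ \<open>eps>0\<close>] by blast
    show "\<exists>no. \<forall>n\<ge>no. norm (L n - Lb) < eps"
      using e'mono[of "r k"] k by (auto simp: e'_def intro: le_less_trans)
  qed
  have opt: "\<forall>Y\<in>M. \<Phi> (Xf Ls) \<le> \<Phi> Y"
  proof
    fix Y assume "Y \<in> M"
    have "Ls \<bullet> Y = 0" "Ls \<bullet> Xf Ls = 0" using LsMp \<open>Y\<in>M\<close> XsM by (auto simp: Mp_def)
    moreover have "0 \<le> \<alpha>/2 * (norm (Y - Xf Ls))\<^sup>2" using al by simp
    ultimately show "\<Phi> (Xf Ls) \<le> \<Phi> Y" using SC[of Ls Y] by linarith
  qed
  show ?thesis using Xconv Lconv XsM opt by blast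
qed


lemma proj_unique:
  assumes M: "subspace (M :: (real^'n^'m) set)"
  shows "\<exists>!Y. Y \<in> M \<and> (\<forall>Z\<in>M. (x - Y) \<bullet> Z = 0)"
proof -
  obtain y z where y: "y \<in> span M" and z: "\<And>w. w \<in> span M \<Longrightarrow> orthogonal z w" and xyz: "x = y + z"
    using orthogonal_subspace_decomp_exists[of M x] by blast
  have sM: "span M = M" using M by simp
  have ex: "y \<in> M \<and> (\<forall>Z\<in>M. (x - y) \<bullet> Z = 0)"
    using y z xyz sM by (auto simp: orthogonal_def)
  show ?thesis
  proof (rule ex1I[of _ y])
    show "y \<in> M \<and> (\<forall>Z\<in>M. (x - y) \<bullet> Z = 0)" by (rule ex)
    fix Y assume Y: "Y \<in> M \<and> (\<forall>Z\<in>M. (x - Y) \<bullet> Z = 0)"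
    have d: "Y - y \<in> M" using Y ex M by (simp add: subspace_diff)
    have "(x - y) \<bullet> (Y - y) = 0" "(x - Y) \<bullet> (Y - y) = 0" using ex Y d by auto
    then have "(Y - y) \<bullet> (Y - y) = 0" by (simp add: inner_diff_left inner_diff_right)
    then show "Y = y" by simp
  qed
qed

lemma proj_props:
  assumes M: "subspace (M :: (real^'n^'m) set)"
  shows "\<And>z. z \<in> M \<Longrightarrow> proj_perp M x \<bullet> z = 0" and "x - proj_perp M x \<in> M"
proof -
  let ?Y = "THE Y. Y \<in> M \<and> (\<forall>Z\<in>M. (x - Y) \<bullet> Z = 0)"
  have h: "?Y \<in> M \<and> (\<forall>Z\<in>M. (x - ?Y) \<bullet> Z = 0)"
    by (rule theI'[OF proj_unique[OF M]])
  show "proj_perp M x \<bullet> z = 0" if "z \<in> M" for z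
    using h that by (simp add: proj_perp_def)
  show "x - proj_perp M x \<in> M" using h by (simp add: proj_perp_def)
qed

theorem theorem7:
  fixes F :: "real^'n^'m" and Msub :: "(real^'n^'m) set"
    and \<sigma>0 \<alpha> :: real
    and X \<Lambda> :: "nat \<Rightarrow> real^'n^'m"
  assumes "subspace Msub"
    and "\<sigma>0 > 0" and "\<alpha> > 0"
    and "\<Lambda> 0 = 0"
    and "\<And>n. X (Suc n) = spectral_map (f_alpha \<sigma>0 \<alpha>) (F - (1/2) *\<^sub>R \<Lambda> n)"
    and "\<And>n. \<Lambda> (Suc n) = \<Lambda> n + \<alpha> *\<^sub>R proj_perp Msub (X (Suc n))"
  shows "\<exists>Xs \<Lambda>s. X \<longlonglongrightarrow> Xs \<and> \<Lambda> \<longlonglongrightarrow> \<Lambda>s \<and> Xs \<in> Msub \<and>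
           (\<forall>Y\<in>Msub. N_env \<sigma>0 F Xs + \<alpha>/2 * (norm Xs)\<^sup>2 \<le> N_env \<sigma>0 F Y + \<alpha>/2 * (norm Y)\<^sup>2)"
proof (rule abstract_uzawa[where \<Phi> = "\<lambda>Z. N_env \<sigma>0 F Z + \<alpha>/2 * (norm Z)\<^sup>2"
      and Xf = "\<lambda>L. spectral_map (f_alpha \<sigma>0 \<alpha>) (F - (1/2) *\<^sub>R L)"
      and P = "proj_perp Msub" and A = "real CARD('m) * \<sigma>0\<^sup>2 + 2 * (norm F)\<^sup>2" and B = "2 + \<alpha>/2"])
  show "subspace Msub" by fact
  show "\<alpha> > 0" by fact
  show "\<And>L Y. (N_env \<sigma>0 F (spectral_map (f_alpha \<sigma>0 \<alpha>) (F - (1/2) *\<^sub>R L)) +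
          \<alpha>/2 * (norm (spectral_map (f_alpha \<sigma>0 \<alpha>) (F - (1/2) *\<^sub>R L)))\<^sup>2) +
          L \<bullet> spectral_map (f_alpha \<sigma>0 \<alpha>) (F - (1/2) *\<^sub>R L) +
          \<alpha>/2 * (norm (Y - spectral_map (f_alpha \<sigma>0 \<alpha>) (F - (1/2) *\<^sub>R L)))\<^sup>2
          \<le> (N_env \<sigma>0 F Y + \<alpha>/2 * (norm Y)\<^sup>2) + L \<bullet> Y"
    by (rule SC_concrete) (use assms in auto)
  show "\<And>Y. N_env \<sigma>0 F Y + \<alpha>/2 * (norm Y)\<^sup>2 \<le> (real CARD('m) * \<sigma>0\<^sup>2 + 2 * (norm F)\<^sup>2) + (2 + \<alpha>/2) * (norm Y)\<^sup>2"
    by (rule growth) (use assms in auto)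
  show "2 + \<alpha>/2 > 0" using assms by simp
  show "\<And>x z. z \<in> Msub \<Longrightarrow> proj_perp Msub x \<bullet> z = 0" by (rule proj_props(1)[OF assms(1)])
  show "\<And>x. x - proj_perp Msub x \<in> Msub" by (rule proj_props(2)[OF assms(1)])
qed (use assms in auto)

end
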